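(* There do not exist closed (compact without boundary) translating solitons in $\mathbb{H}^2\times\mathbb{R}$.
   Context: $\mathbb{H}^2\times\mathbb{R}$ carries the product metric $\langle\cdot,\cdot\rangle$ of the hyperbolic plane of curvature $-1$ and the real line; $\partial_z$ is the unit vertical field. An oriented immersed surface $M$ with unit normal $\eta$ and mean curvature $H_M$ (half the trace of the second fundamental form with respect to $\eta$) is a translating soliton if $H_M=\langle\eta,\partial_z\rangle$ at every point. *)

theory Defs
  imports "HOL-Analysis.Analysis"
begin

text \<open>Model of H^2 x R: points (x,(y,z)) with y > 0; H^2 is the upper half-plane
  with metric (dx^2+dy^2)/y^2 (curvature -1), R carries dz^2.\<close>

type_synonym pt = "real \<times> real \<times> real"

definition cx :: "pt \<Rightarrow> real" where "cx P = fst P"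
definition cy :: "pt \<Rightarrow> real" where "cy P = fst (snd P)"
definition cz :: "pt \<Rightarrow> real" where "cz P = snd (snd P)"

definition in_H2R :: "pt \<Rightarrow> bool" where "in_H2R P \<longleftrightarrow> cy P > 0"

definition hmetric :: "pt \<Rightarrow> pt \<Rightarrow> pt \<Rightarrow> real" where
  "hmetric P V W = (cx V * cx W + cy V * cy W) / (cy P)^2 + cz V * cz W"

text \<open>Christoffel term Gamma(V,W) of the Levi-Civita connection at P:
  Gamma^x_{xy} = -1/y, Gamma^y_{xx} = 1/y, Gamma^y_{yy} = -1/y, all others 0.\<close>
definition chr :: "pt \<Rightarrow> pt \<Rightarrow> pt \<Rightarrow> pt" where
  "chr P V W = (- (cx V * cy W + cy V * cx W) / cy P,
                (cx V * cx W - cy V * cy W) / cy P, 0)"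

definition pdu :: "(real \<times> real \<Rightarrow> 'b::real_normed_vector) \<Rightarrow> real \<times> real \<Rightarrow> 'b" where
  "pdu f p = vector_derivative (\<lambda>t. f (t, snd p)) (at (fst p))"
definition pdv :: "(real \<times> real \<Rightarrow> 'b::real_normed_vector) \<Rightarrow> real \<times> real \<Rightarrow> 'b" where
  "pdv f p = vector_derivative (\<lambda>t. f (fst p, t)) (at (snd p))"

definition C1_on :: "(real \<times> real) set \<Rightarrow> (real \<times> real \<Rightarrow> 'b::real_normed_vector) \<Rightarrow> bool" where
  "C1_on U f \<longleftrightarrow>
     (\<forall>p\<in>U. ((\<lambda>t. f (t, snd p)) has_vector_derivative pdu f p) (at (fst p)) \<and>
            ((\<lambda>t. f (fst p, t)) has_vector_derivative pdv f p) (at (snd p))) \<and>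
     continuous_on U f \<and> continuous_on U (pdu f) \<and> continuous_on U (pdv f)"

definition C2_on :: "(real \<times> real) set \<Rightarrow> (real \<times> real \<Rightarrow> 'b::real_normed_vector) \<Rightarrow> bool" where
  "C2_on U f \<longleftrightarrow> C1_on U f \<and> C1_on U (pdu f) \<and> C1_on U (pdv f)"

definition immersive_at :: "(real \<times> real \<Rightarrow> pt) \<Rightarrow> real \<times> real \<Rightarrow> bool" where
  "immersive_at X p \<longleftrightarrow>
     (\<forall>a b. a *\<^sub>R pdu X p + b *\<^sub>R pdv X p = 0 \<longrightarrow> a = 0 \<and> b = 0)"

definition unit_normal_at :: "(real \<times> real \<Rightarrow> pt) \<Rightarrow> (real \<times> real \<Rightarrow> pt) \<Rightarrow> real \<times> real \<Rightarrow> bool" where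
  "unit_normal_at X N p \<longleftrightarrow>
     hmetric (X p) (N p) (pdu X p) = 0 \<and> hmetric (X p) (N p) (pdv X p) = 0 \<and>
     hmetric (X p) (N p) (N p) = 1"

text \<open>Mean curvature (half trace of the second fundamental form w.r.t. N) of the
  parametrised surface X at p: H = (g22 h11 - 2 g12 h12 + g11 h22) / (2 det g),
  with h_ij = < D_{d_i} X_j , N >.\<close>
definition mean_curv :: "(real \<times> real \<Rightarrow> pt) \<Rightarrow> (real \<times> real \<Rightarrow> pt) \<Rightarrow> real \<times> real \<Rightarrow> real" where
  "mean_curv X N p =
    (let P = X p; Xu = pdu X p; Xv = pdv X p;
         g11 = hmetric P Xu Xu; g12 = hmetric P Xu Xv; g22 = hmetric P Xv Xv;
         h11 = hmetric P (pdu (pdu X) p + chr P Xu Xu) (N p);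
         h12 = hmetric P (pdv (pdu X) p + chr P Xv Xu) (N p);
         h22 = hmetric P (pdv (pdv X) p + chr P Xv Xv) (N p)
     in (g22 * h11 - 2 * g12 * h12 + g11 * h22) / (2 * (g11 * g22 - g12^2)))"

text \<open>A closed (compact, without boundary, nonempty) oriented immersed surface:
  an abstract compact Hausdorff space M locally homeomorphic to open subsets of R^2
  via charts phi such that F o phi is a C^2 immersion into H^2 x R; eta is a
  continuous unit normal field along F; the translating soliton equation
  H = <eta, d_z> holds everywhere.\<close>
definition closed_translating_soliton :: "'a topology \<Rightarrow> ('a \<Rightarrow> pt) \<Rightarrow> ('a \<Rightarrow> pt) \<Rightarrow> bool" where
  "closed_translating_soliton M F eta \<longleftrightarrow>
     compact_space M \<and> Hausdorff_space M \<and> topspace M \<noteq> {} \<and>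
     continuous_map M euclidean F \<and> continuous_map M euclidean eta \<and>
     (\<forall>q\<in>topspace M. in_H2R (F q)) \<and>
     (\<forall>q\<in>topspace M. \<exists>U (phi :: real \<times> real \<Rightarrow> 'a).
        open U \<and> q \<in> phi ` U \<and> openin M (phi ` U) \<and>
        homeomorphic_map (subtopology euclidean U) (subtopology M (phi ` U)) phi \<and>
        C2_on U (F \<circ> phi) \<and>
        (\<forall>p\<in>U. immersive_at (F \<circ> phi) p \<and>
                unit_normal_at (F \<circ> phi) (eta \<circ> phi) p \<and>
                mean_curv (F \<circ> phi) (eta \<circ> phi) p = hmetric (F (phi p)) (eta (phi p)) (0, 0, 1)))"

end

theory Submission
  imports Defs
begin

lemma taylor2:
  fixes h h' h'' :: "real \<Rightarrow> real"
  assumes d1: "\<And>y. \<bar>y - c\<bar> \<le> \<bar>x - c\<bar> \<Longrightarrow> (h has_real_derivative h' y) (at y)"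
    and d2: "\<And>y. \<bar>y - c\<bar> \<le> \<bar>x - c\<bar> \<Longrightarrow> (h' has_real_derivative h'' y) (at y)"
  shows "\<exists>\<xi>. \<bar>\<xi> - c\<bar> \<le> \<bar>x - c\<bar> \<and> h x = h c + h' c * (x - c) + h'' \<xi> / 2 * (x - c)^2"
proof (cases "x = c")
  case True then show ?thesis by (intro exI[of _ c]) simp
next
  case False
  define diff where "diff = (\<lambda>m::nat. if m = 0 then h else if m = 1 then h' else h'')"
  have "\<exists>t. (if x < c then x < t \<and> t < c else c < t \<and> t < x) \<and>
    h x = (\<Sum>m<2. (diff m c / fact m) * (x - c)^m) + (diff 2 t / fact 2) * (x - c)^2"
  proof (rule Taylor[where a="min x c" and b="max x c"])
    show "\<forall>m t. m < 2 \<and> min x c \<le> t \<and> t \<le> max x c \<longrightarrow> DERIV (diff m) t :> diff (Suc m) t"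
    proof (intro allI impI)
      fix m t assume a: "m < (2::nat) \<and> min x c \<le> t \<and> t \<le> max x c"
      then have "\<bar>t - c\<bar> \<le> \<bar>x - c\<bar>" by (auto simp: min_def max_def split: if_splits)
      moreover have "m = 0 \<or> m = 1" using a by auto
      ultimately show "DERIV (diff m) t :> diff (Suc m) t"
        using d1 d2 by (auto simp: diff_def)
    qed
  qed (use False in \<open>auto simp: diff_def\<close>)
  then obtain t where t: "(if x < c then x < t \<and> t < c else c < t \<and> t < x)"
    and e: "h x = (\<Sum>m<2. (diff m c / fact m) * (x - c)^m) + (diff 2 t / fact 2) * (x - c)^2" by blast
  have "\<bar>t - c\<bar> \<le> \<bar>x - c\<bar>" using t by (auto split: if_splits)
  moreover have "h x = h c + h' c * (x - c) + h'' t / 2 * (x - c)^2"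
    using e by (simp add: diff_def numeral_2_eq_2 lessThan_Suc)
  ultimately show ?thesis by blast
qed

lemma mvt1:
  fixes h h' :: "real \<Rightarrow> real"
  assumes d1: "\<And>y. \<bar>y - c\<bar> \<le> \<bar>x - c\<bar> \<Longrightarrow> (h has_real_derivative h' y) (at y)"
  shows "\<exists>\<xi>. \<bar>\<xi> - c\<bar> \<le> \<bar>x - c\<bar> \<and> h x = h c + h' \<xi> * (x - c)"
proof (cases "x < c")
  case True
  then obtain z where "x < z" "z < c" "h c - h x = (c - x) * h' z"
    using MVT2[of x c h h'] d1 by force
  then show ?thesis by (intro exI[of _ z]) (auto simp: algebra_simps)
next
  case False
  show ?thesis
  proof (cases "x = c")
    case True then show ?thesis by auto
  next
    case F2: False
    with False have "c < x" by auto
    then obtain z where "c < z" "z < x" "h x - h c = (x - c) * h' z"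
      using MVT2[of c x h h'] d1 by force
    then show ?thesis by (intro exI[of _ z]) (auto simp: algebra_simps)
  qed
qed

lemma cz_deriv:
  assumes "(g has_vector_derivative v) (at x)"
  shows "((\<lambda>t. cz (g t)) has_real_derivative cz v) (at x)"
proof -
  have "((\<lambda>x. snd (snd (g x))) has_derivative (\<lambda>x. x * snd (snd v))) (at x)"
    using has_derivative_snd[OF has_derivative_snd[OF assms[unfolded has_vector_derivative_def]]]
    by simp
  moreover have "(\<lambda>x. x * snd (snd v)) = (*) (snd (snd v))" by (auto simp: fun_eq_iff)
  ultimately show ?thesis unfolding cz_def has_field_derivative_def by simp
qed

lemma in_ball2:
  assumes "\<bar>x - u0\<bar> + \<bar>y - v0\<bar> < r"
  shows "dist (x, y) (u0, v0) < r"
proof -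
  have "dist (x, y) (u0, v0) = sqrt ((x - u0)^2 + (y - v0)^2)"
    by (simp add: dist_Pair_Pair dist_real_def)
  also have "\<dots> \<le> \<bar>x - u0\<bar> + \<bar>y - v0\<bar>" by (rule sqrt_sum_squares_le_sum_abs)
  finally show ?thesis using assms by linarith
qed

lemma hess_first:
  fixes f fu :: "real \<times> real \<Rightarrow> real"
  assumes U: "open U" "(u0,v0) \<in> U"
  and mx: "\<forall>q\<in>U. f q \<le> f (u0,v0)"
  and d1: "\<forall>p\<in>U. ((\<lambda>t. f (t, snd p)) has_real_derivative fu p) (at (fst p))"
  and d2: "\<forall>p\<in>U. ((\<lambda>t. f (fst p, t)) has_real_derivative fv p) (at (snd p))"
  shows "fu (u0,v0) = 0" "fv (u0,v0) = 0"
proof -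
  obtain r where r: "r > 0" "ball (u0,v0) r \<subseteq> U" using U open_contains_ball by blast
  have inU: "(x,y) \<in> U" if "\<bar>x - u0\<bar> + \<bar>y - v0\<bar> < r" for x y
    using in_ball2[OF that] r by (auto simp: dist_commute)
  show "fu (u0,v0) = 0"
  proof (rule DERIV_local_max[OF _ r(1)])
    show "((\<lambda>t. f (t, v0)) has_real_derivative fu (u0,v0)) (at u0)" using d1 U by force
    show "\<forall>y. \<bar>u0 - y\<bar> < r \<longrightarrow> f (y, v0) \<le> f (u0, v0)"
      using inU mx by (simp add: abs_minus_commute)
  qed
  show "fv (u0,v0) = 0"
  proof (rule DERIV_local_max[OF _ r(1)])
    show "((\<lambda>t. f (u0, t)) has_real_derivative fv (u0,v0)) (at v0)" using d2 U by force
    show "\<forall>y. \<bar>v0 - y\<bar> < r \<longrightarrow> f (u0, y) \<le> f (u0, v0)"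
      using inU mx by (simp add: abs_minus_commute)
  qed
qed

lemma hess_second:
  fixes f fu fv fuu fuv fvv :: "real \<times> real \<Rightarrow> real"
  assumes U: "open U" "(u0,v0) \<in> U"
  and mx: "\<forall>q\<in>U. f q \<le> f (u0,v0)"
  and d1: "\<forall>p\<in>U. ((\<lambda>t. f (t, snd p)) has_real_derivative fu p) (at (fst p))"
  and d2: "\<forall>p\<in>U. ((\<lambda>t. f (fst p, t)) has_real_derivative fv p) (at (snd p))"
  and d3: "\<forall>p\<in>U. ((\<lambda>t. fu (t, snd p)) has_real_derivative fuu p) (at (fst p))"
  and d4: "\<forall>p\<in>U. ((\<lambda>t. fu (fst p, t)) has_real_derivative fuv p) (at (snd p))"
  and d5: "\<forall>p\<in>U. ((\<lambda>t. fv (fst p, t)) has_real_derivative fvv p) (at (snd p))"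
  and c1: "continuous_on U fuu" and c2: "continuous_on U fuv" and c3: "continuous_on U fvv"
  shows "a^2 * fuu (u0,v0) + 2*a*b*fuv (u0,v0) + b^2 * fvv (u0,v0) \<le> 0"
proof (rule ccontr)
  define p0 where "p0 = (u0, v0)"
  define Q0 where "Q0 = a^2 * fuu p0 + 2*a*b*fuv p0 + b^2 * fvv p0"
  assume "\<not> ?thesis"
  then have Q0: "Q0 > 0" by (simp add: Q0_def p0_def)
  have fu0: "fu p0 = 0" and fv0: "fv p0 = 0"
    using hess_first[OF U mx d1 d2] by (auto simp: p0_def)
  define K where "K = a^2 + 2*\<bar>a*b\<bar> + b^2 + 1"
  have K: "K > 0" unfolding K_def by (simp add: add_nonneg_pos)
  define e where "e = Q0 / (2*K)"
  have e: "e > 0" using Q0 K by (simp add: e_def)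
  obtain r where r: "r > 0" "ball p0 r \<subseteq> U" using U open_contains_ball p0_def by blast
  obtain d1' where d1': "d1' > 0" "\<forall>x'\<in>U. dist x' p0 < d1' \<longrightarrow> dist (fuu x') (fuu p0) < e"
    using c1 e U(2) unfolding continuous_on_iff p0_def by blast
  obtain d2' where d2': "d2' > 0" "\<forall>x'\<in>U. dist x' p0 < d2' \<longrightarrow> dist (fuv x') (fuv p0) < e"
    using c2 e U(2) unfolding continuous_on_iff p0_def by blast
  obtain d3' where d3': "d3' > 0" "\<forall>x'\<in>U. dist x' p0 < d3' \<longrightarrow> dist (fvv x') (fvv p0) < e"
    using c3 e U(2) unfolding continuous_on_iff p0_def by blast
  define \<delta> where "\<delta> = min r (min d1' (min d2' d3'))"
  have \<delta>: "\<delta> > 0" using r d1' d2' d3' by (simp add: \<delta>_def)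
  define t where "t = \<delta> / (2 * (\<bar>a\<bar> + \<bar>b\<bar> + 1))"
  have t: "t > 0" using \<delta> by (simp add: t_def add_nonneg_pos)
  define A where "A = t * a"
  define B where "B = t * b"
  have AB: "\<bar>A\<bar> + \<bar>B\<bar> < \<delta>"
  proof -
    have "\<bar>A\<bar> + \<bar>B\<bar> = t * (\<bar>a\<bar> + \<bar>b\<bar>)" using t by (simp add: A_def B_def abs_mult algebra_simps)
    also have "\<dots> < t * (2 * (\<bar>a\<bar> + \<bar>b\<bar> + 1))" using t by (intro mult_strict_left_mono) auto
    also have "\<dots> = \<delta>" by (simp add: t_def add_nonneg_pos)
    finally show ?thesis .
  qed
  have near: "(x,y) \<in> U \<and> dist (x,y) p0 < \<delta>" if "\<bar>x - u0\<bar> + \<bar>y - v0\<bar> \<le> \<bar>A\<bar> + \<bar>B\<bar>" for x y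
  proof -
    have "dist (x,y) p0 < \<delta>" unfolding p0_def using that AB by (intro in_ball2) linarith
    moreover have "\<delta> \<le> r" by (simp add: \<delta>_def)
    ultimately show ?thesis using r by (auto simp: dist_commute)
  qed
  obtain \<xi>1 where \<xi>1: "\<bar>\<xi>1 - v0\<bar> \<le> \<bar>(v0 + B) - v0\<bar>"
    and e1: "f (u0, v0 + B) = f (u0, v0) + fv (u0, v0) * ((v0 + B) - v0) + fvv (u0, \<xi>1) / 2 * ((v0 + B) - v0)^2"
  proof -
    have "\<exists>\<xi>. \<bar>\<xi> - v0\<bar> \<le> \<bar>(v0 + B) - v0\<bar> \<and> (\<lambda>s. f (u0, s)) (v0 + B) = (\<lambda>s. f (u0, s)) v0
          + (\<lambda>s. fv (u0, s)) v0 * ((v0 + B) - v0) + (\<lambda>s. fvv (u0, s)) \<xi> / 2 * ((v0 + B) - v0)^2"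
    proof (rule taylor2)
      fix y assume y: "\<bar>y - v0\<bar> \<le> \<bar>v0 + B - v0\<bar>"
      then have "(u0, y) \<in> U" using near[of u0 y] by auto
      then show "((\<lambda>s. f (u0, s)) has_real_derivative fv (u0, y)) (at y)"
        "((\<lambda>s. fv (u0, s)) has_real_derivative fvv (u0, y)) (at y)"
        using d2 d5 by force+
    qed
    then show ?thesis using that by auto
  qed
  obtain \<xi>2 where \<xi>2: "\<bar>\<xi>2 - u0\<bar> \<le> \<bar>(u0 + A) - u0\<bar>"
    and e2: "f (u0 + A, v0 + B) = f (u0, v0 + B) + fu (u0, v0 + B) * ((u0 + A) - u0) + fuu (\<xi>2, v0 + B) / 2 * ((u0 + A) - u0)^2"
  proof -
    have "\<exists>\<xi>. \<bar>\<xi> - u0\<bar> \<le> \<bar>(u0 + A) - u0\<bar> \<and> (\<lambda>s. f (s, v0 + B)) (u0 + A) = (\<lambda>s. f (s, v0 + B)) u0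
          + (\<lambda>s. fu (s, v0 + B)) u0 * ((u0 + A) - u0) + (\<lambda>s. fuu (s, v0 + B)) \<xi> / 2 * ((u0 + A) - u0)^2"
    proof (rule taylor2)
      fix y assume y: "\<bar>y - u0\<bar> \<le> \<bar>u0 + A - u0\<bar>"
      then have "(y, v0 + B) \<in> U" using near[of y "v0 + B"] by auto
      then show "((\<lambda>s. f (s, v0 + B)) has_real_derivative fu (y, v0 + B)) (at y)"
        "((\<lambda>s. fu (s, v0 + B)) has_real_derivative fuu (y, v0 + B)) (at y)"
        using d1 d3 by force+
    qed
    then show ?thesis using that by auto
  qed
  obtain \<xi>3 where \<xi>3: "\<bar>\<xi>3 - v0\<bar> \<le> \<bar>(v0 + B) - v0\<bar>"
    and e3: "fu (u0, v0 + B) = fu (u0, v0) + fuv (u0, \<xi>3) * ((v0 + B) - v0)"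
  proof -
    have "\<exists>\<xi>. \<bar>\<xi> - v0\<bar> \<le> \<bar>(v0 + B) - v0\<bar> \<and> (\<lambda>s. fu (u0, s)) (v0 + B) = (\<lambda>s. fu (u0, s)) v0
          + (\<lambda>s. fuv (u0, s)) \<xi> * ((v0 + B) - v0)"
    proof (rule mvt1)
      fix y assume y: "\<bar>y - v0\<bar> \<le> \<bar>v0 + B - v0\<bar>"
      then have "(u0, y) \<in> U" using near[of u0 y] by auto
      then show "((\<lambda>s. fu (u0, s)) has_real_derivative fuv (u0, y)) (at y)"
        using d4 by force
    qed
    then show ?thesis using that by auto
  qed
  have n1: "(u0, \<xi>1) \<in> U \<and> dist (u0, \<xi>1) p0 < \<delta>" using \<xi>1 by (intro near) auto
  have n2: "(\<xi>2, v0 + B) \<in> U \<and> dist (\<xi>2, v0 + B) p0 < \<delta>" using \<xi>2 by (intro near) auto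
  have n3: "(u0, \<xi>3) \<in> U \<and> dist (u0, \<xi>3) p0 < \<delta>" using \<xi>3 by (intro near) auto
  have n4: "(u0 + A, v0 + B) \<in> U" using near[of "u0 + A" "v0 + B"] by auto
  define vv where "vv = fvv (u0, \<xi>1)"
  define uu where "uu = fuu (\<xi>2, v0 + B)"
  define uv where "uv = fuv (u0, \<xi>3)"
  have bvv: "\<bar>vv - fvv p0\<bar> < e" using d3' n1 by (auto simp: vv_def dist_real_def \<delta>_def)
  have buu: "\<bar>uu - fuu p0\<bar> < e" using d1' n2 by (auto simp: uu_def dist_real_def \<delta>_def)
  have buv: "\<bar>uv - fuv p0\<bar> < e" using d2' n3 by (auto simp: uv_def dist_real_def \<delta>_def)
  have diff: "f (u0 + A, v0 + B) - f p0 = t^2 / 2 * (a^2 * uu + 2*a*b*uv + b^2 * vv)"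
    using e1 e2 e3 fu0 fv0 unfolding p0_def uu_def uv_def vv_def A_def B_def
    by (simp add: algebra_simps power2_eq_square)
  have i1: "a^2 * (uu - fuu p0) \<ge> - (a^2 * e)"
  proof -
    have "\<bar>a^2 * (uu - fuu p0)\<bar> \<le> a^2 * e" using buu by (simp add: abs_mult mult_left_mono)
    then show ?thesis by linarith
  qed
  have i2: "b^2 * (vv - fvv p0) \<ge> - (b^2 * e)"
  proof -
    have "\<bar>b^2 * (vv - fvv p0)\<bar> \<le> b^2 * e" using bvv by (simp add: abs_mult mult_left_mono)
    then show ?thesis by linarith
  qed
  have i3: "2*a*b * (uv - fuv p0) \<ge> - (2*\<bar>a*b\<bar> * e)"
  proof -
    have "\<bar>2*a*b * (uv - fuv p0)\<bar> = 2*\<bar>a*b\<bar> * \<bar>uv - fuv p0\<bar>" by (simp add: abs_mult)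
    also have "\<dots> \<le> 2*\<bar>a*b\<bar> * e" using buv by (intro mult_left_mono) auto
    finally show ?thesis by linarith
  qed
  have "(a^2 + 2*\<bar>a*b\<bar> + b^2) * e < K * e" using e by (simp add: K_def)
  also have "K * e = Q0 / 2" using K by (simp add: e_def)
  finally have "(a^2 + 2*\<bar>a*b\<bar> + b^2) * e < Q0 / 2" .
  then have "a^2 * uu + 2*a*b*uv + b^2 * vv > 0"
    using i1 i2 i3 Q0 unfolding Q0_def by (simp add: algebra_simps)
  then have "t^2 / 2 * (a^2 * uu + 2*a*b*uv + b^2 * vv) > 0" using t by simp
  then have "f (u0 + A, v0 + B) - f p0 > 0" using diff by simp
  moreover have "f (u0 + A, v0 + B) \<le> f p0" using mx n4 by (simp add: p0_def)
  ultimately show False by simp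
qed

lemma lincomb_zero:
  "a *\<^sub>R V + b *\<^sub>R W = (0::pt) \<longleftrightarrow>
    a * cx V + b * cx W = 0 \<and> a * cy V + b * cy W = 0 \<and> a * cz V + b * cz W = 0"
  by (cases V; cases W) (auto simp: cx_def cy_def cz_def zero_prod_def)

lemma geo:
  assumes imm: "immersive_at X p" and un: "unit_normal_at X N p"
  and H: "mean_curv X N p = hmetric (X p) (N p) (0,0,1)"
  and yp: "cy (X p) > 0"
  and zu: "cz (pdu X p) = 0" and zv: "cz (pdv X p) = 0"
  and Q: "\<forall>a b. a^2 * cz (pdu (pdu X) p) + 2*a*b*cz (pdv (pdu X) p) + b^2 * cz (pdv (pdv X) p) \<le> 0"
  shows False
proof -
  define Y where "Y = cy (X p)"
  define x1 where "x1 = cx (pdu X p)"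
  define y1 where "y1 = cy (pdu X p)"
  define x2 where "x2 = cx (pdv X p)"
  define y2 where "y2 = cy (pdv X p)"
  define n1 where "n1 = cx (N p)"
  define n2 where "n2 = cy (N p)"
  define n3 where "n3 = cz (N p)"
  define A11 where "A11 = cz (pdu (pdu X) p)"
  define A12 where "A12 = cz (pdv (pdu X) p)"
  define A22 where "A22 = cz (pdv (pdv X) p)"
  define D where "D = x1 * y2 - y1 * x2"
  have Y: "Y > 0" using yp by (simp add: Y_def)
  have imm': "a = 0 \<and> b = 0" if h1: "a * x1 + b * x2 = 0" and h2: "a * y1 + b * y2 = 0" for a b
  proof -
    have "a *\<^sub>R pdu X p + b *\<^sub>R pdv X p = 0"
      unfolding lincomb_zero using h1 h2 zu zv by (simp add: x1_def x2_def y1_def y2_def)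
    then show ?thesis using imm unfolding immersive_at_def by blast
  qed
  have D: "D \<noteq> 0"
  proof
    assume D0: "D = 0"
    have "y2 = 0 \<and> - y1 = 0" using imm'[of y2 "- y1"] D0 by (auto simp: D_def algebra_simps)
    moreover have "x2 = 0 \<and> - x1 = 0" using imm'[of x2 "- x1"] D0 by (auto simp: D_def algebra_simps)
    ultimately show False using imm'[of 1 0] by auto
  qed
  have u1: "(n1 * x1 + n2 * y1) / Y^2 + n3 * 0 = 0" and u2: "(n1 * x2 + n2 * y2) / Y^2 + n3 * 0 = 0"
    and u3: "(n1 * n1 + n2 * n2) / Y^2 + n3 * n3 = 1"
    using un zu zv unfolding unit_normal_at_def hmetric_def
    by (simp_all only: x1_def x2_def y1_def y2_def n1_def n2_def n3_def Y_def)
  have o1: "n1 * x1 + n2 * y1 = 0" using u1 Y by simp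
  have o2: "n1 * x2 + n2 * y2 = 0" using u2 Y by simp
  have nn: "(n1^2 + n2^2) / Y^2 + n3^2 = 1" using u3 by (simp add: power2_eq_square)
  have "n1 * D = y2 * (n1 * x1 + n2 * y1) - y1 * (n1 * x2 + n2 * y2)" unfolding D_def by (simp add: algebra_simps)
  then have "n1 * D = 0" using o1 o2 by simp
  then have n1: "n1 = 0" using D by simp
  have "n2 * D = x1 * (n1 * x2 + n2 * y2) - x2 * (n1 * x1 + n2 * y1)" unfolding D_def by (simp add: algebra_simps)
  then have "n2 * D = 0" using o1 o2 by simp
  then have n2: "n2 = 0" using D by simp
  have n3: "n3^2 = 1" using nn n1 n2 by simp
  define g11 where "g11 = (x1*x1 + y1*y1) / Y^2"
  define g12 where "g12 = (x1*x2 + y1*y2) / Y^2"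
  define g22 where "g22 = (x2*x2 + y2*y2) / Y^2"
  have N0: "cx (N p) = 0" "cy (N p) = 0" using n1 n2 by (simp_all add: n1_def n2_def)
  have cz_add_chr: "\<And>V P A B. cz (V + chr P A B) = cz V" by (simp add: cz_def chr_def)
  have h11: "hmetric (X p) (pdu (pdu X) p + chr (X p) (pdu X p) (pdu X p)) (N p) = A11 * n3"
    by (simp add: hmetric_def N0 cz_add_chr A11_def n3_def)
  have h12: "hmetric (X p) (pdv (pdu X) p + chr (X p) (pdv X p) (pdu X p)) (N p) = A12 * n3"
    by (simp add: hmetric_def N0 cz_add_chr A12_def n3_def)
  have h22: "hmetric (X p) (pdv (pdv X) p + chr (X p) (pdv X p) (pdv X p)) (N p) = A22 * n3"
    by (simp add: hmetric_def N0 cz_add_chr A22_def n3_def)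
  have k11: "hmetric (X p) (pdu X p) (pdu X p) = g11"
    by (simp add: hmetric_def zu g11_def x1_def y1_def Y_def)
  have k12: "hmetric (X p) (pdu X p) (pdv X p) = g12"
    by (simp add: hmetric_def zu zv g12_def x1_def y1_def x2_def y2_def Y_def)
  have k22: "hmetric (X p) (pdv X p) (pdv X p) = g22"
    by (simp add: hmetric_def zv g22_def x2_def y2_def Y_def)
  have kn: "hmetric (X p) (N p) (0,0,1) = n3"
    by (simp add: hmetric_def N0 n3_def cx_def cy_def cz_def)
  have E: "(g22 * (A11 * n3) - 2 * g12 * (A12 * n3) + g11 * (A22 * n3)) / (2 * (g11 * g22 - g12^2)) = n3"
    using H unfolding mean_curv_def Let_def h11 h12 h22 k11 k12 k22 kn .
  have det0: "g11 * g22 - g12^2 = ((x1*x1+y1*y1)*(x2*x2+y2*y2) - (x1*x2+y1*y2)^2) / Y^4"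
    unfolding g11_def g12_def g22_def by (simp add: power_divide diff_divide_distrib power2_eq_square power4_eq_xxxx mult.assoc)
  have det: "g11 * g22 - g12^2 = D^2 / Y^4"
    unfolding det0 D_def by (simp add: power2_eq_square algebra_simps)
  have detpos: "g11 * g22 - g12^2 > 0" using det D Y by simp
  have g11: "g11 > 0"
  proof -
    have "x1 \<noteq> 0 \<or> y1 \<noteq> 0" using D by (auto simp: D_def)
    then have "x1^2 + y1^2 > 0" by (simp add: sum_power2_gt_zero_iff)
    then have "x1*x1 + y1*y1 > 0" by (simp add: power2_eq_square)
    then show ?thesis using Y by (simp add: g11_def)
  qed
  have q1: "A11 \<le> 0" using Q[rule_format, of 1 0] by (simp add: A11_def)
  have q2: "(- g12)^2 * A11 + 2 * (- g12) * g11 * A12 + g11^2 * A22 \<le> 0"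
    using Q[rule_format, of "- g12" g11] by (simp add: A11_def A12_def A22_def)
  have "g11 * (g22 * A11 - 2 * g12 * A12 + g11 * A22) = ((- g12)^2 * A11 + 2 * (- g12) * g11 * A12 + g11^2 * A22) + (g11 * g22 - g12^2) * A11"
    by (simp add: algebra_simps power2_eq_square)
  also have "\<dots> \<le> 0" using q1 q2 detpos by (simp add: add_nonpos_nonpos mult_pos_neg mult_nonneg_nonpos)
  finally have num: "g22 * A11 - 2 * g12 * A12 + g11 * A22 \<le> 0" using g11
    by (simp add: mult_le_0_iff)
  have n3nz: "n3 \<noteq> 0" using n3 by auto
  have "g22 * (A11 * n3) - 2 * g12 * (A12 * n3) + g11 * (A22 * n3) = n3 * (2 * (g11 * g22 - g12^2))"
    using E detpos by (simp add: field_simps)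
  then have "n3 * (g22 * A11 - 2 * g12 * A12 + g11 * A22) = n3 * (2 * (g11 * g22 - g12^2))"
    by (simp add: algebra_simps)
  then have "g22 * A11 - 2 * g12 * A12 + g11 * A22 = 2 * (g11 * g22 - g12^2)" using n3nz by simp
  then show False using num detpos by simp
qed

lemma cz_cont: "continuous_on S cz"
  unfolding cz_def by (intro continuous_intros)

theorem proposition5p5:
  shows "\<not> (\<exists>(M :: 'a topology) F eta. closed_translating_soliton M F eta)"
proof
  assume "\<exists>(M :: 'a topology) F eta. closed_translating_soliton M F eta"
  then obtain M :: "'a topology" and F eta where S: "closed_translating_soliton M F eta" by blast
  note SS = S[unfolded closed_translating_soliton_def]
  have cpt: "compact (F ` topspace M)"
    using image_compactin[of M "topspace M" euclidean F] SS by (simp add: compact_space_def)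
  have ne: "F ` topspace M \<noteq> {}" using SS by simp
  obtain P0 where P0: "P0 \<in> F ` topspace M" and P0max: "\<forall>P\<in>F ` topspace M. cz P \<le> cz P0"
    using continuous_attains_sup[OF cpt ne cz_cont] by blast
  then obtain q0 where q0: "q0 \<in> topspace M" "P0 = F q0" by blast
  obtain U and phi :: "real \<times> real \<Rightarrow> 'a" where
    Uo: "open U" and q0U: "q0 \<in> phi ` U" and oi: "openin M (phi ` U)"
    and C2: "C2_on U (F \<circ> phi)"
    and pts: "\<forall>p\<in>U. immersive_at (F \<circ> phi) p \<and> unit_normal_at (F \<circ> phi) (eta \<circ> phi) p \<and>
        mean_curv (F \<circ> phi) (eta \<circ> phi) p = hmetric (F (phi p)) (eta (phi p)) (0, 0, 1)"
    using SS q0(1) by metis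
  have sub: "phi ` U \<subseteq> topspace M" using openin_subset[OF oi] .
  obtain p0 where p0: "p0 \<in> U" "phi p0 = q0" using q0U by blast
  obtain u0 v0 where uv: "p0 = (u0, v0)" by (cases p0)
  define X where "X = F \<circ> phi"
  define f where "f = (\<lambda>p. cz (X p))"
  have mx: "\<forall>q\<in>U. f q \<le> f (u0, v0)"
    using P0max sub p0 q0 uv by (auto simp: f_def X_def)
  have C1X: "C1_on U X" and C1u: "C1_on U (pdu X)" and C1v: "C1_on U (pdv X)"
    using C2 by (auto simp: C2_on_def X_def)
  have d1: "\<forall>p\<in>U. ((\<lambda>t. f (t, snd p)) has_real_derivative (\<lambda>p. cz (pdu X p)) p) (at (fst p))"
    using C1X unfolding C1_on_def f_def by (auto intro: cz_deriv)
  have d2: "\<forall>p\<in>U. ((\<lambda>t. f (fst p, t)) has_real_derivative (\<lambda>p. cz (pdv X p)) p) (at (snd p))"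
    using C1X unfolding C1_on_def f_def by (auto intro: cz_deriv)
  have d3: "\<forall>p\<in>U. ((\<lambda>t. (\<lambda>p. cz (pdu X p)) (t, snd p)) has_real_derivative (\<lambda>p. cz (pdu (pdu X) p)) p) (at (fst p))"
    using C1u unfolding C1_on_def by (auto intro: cz_deriv)
  have d4: "\<forall>p\<in>U. ((\<lambda>t. (\<lambda>p. cz (pdu X p)) (fst p, t)) has_real_derivative (\<lambda>p. cz (pdv (pdu X) p)) p) (at (snd p))"
    using C1u unfolding C1_on_def by (auto intro: cz_deriv)
  have d5: "\<forall>p\<in>U. ((\<lambda>t. (\<lambda>p. cz (pdv X p)) (fst p, t)) has_real_derivative (\<lambda>p. cz (pdv (pdv X) p)) p) (at (snd p))"
    using C1v unfolding C1_on_def by (auto intro: cz_deriv)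
  have c1: "continuous_on U (\<lambda>p. cz (pdu (pdu X) p))"
    using C1u unfolding C1_on_def by (auto intro: continuous_on_compose2[OF cz_cont])
  have c2: "continuous_on U (\<lambda>p. cz (pdv (pdu X) p))"
    using C1u unfolding C1_on_def by (auto intro: continuous_on_compose2[OF cz_cont])
  have c3: "continuous_on U (\<lambda>p. cz (pdv (pdv X) p))"
    using C1v unfolding C1_on_def by (auto intro: continuous_on_compose2[OF cz_cont])
  have U0: "(u0, v0) \<in> U" using p0 uv by simp
  have first: "cz (pdu X (u0, v0)) = 0" "cz (pdv X (u0, v0)) = 0"
    using hess_first[OF Uo U0 mx d1 d2] by auto
  have Q: "\<forall>a b. a^2 * cz (pdu (pdu X) (u0, v0)) + 2*a*b*cz (pdv (pdu X) (u0, v0)) + b^2 * cz (pdv (pdv X) (u0, v0)) \<le> 0"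
    using hess_second[OF Uo U0 mx d1 d2 d3 d4 d5 c1 c2 c3] by blast
  have yp: "cy (X (u0, v0)) > 0"
    using SS sub U0 by (auto simp: X_def in_H2R_def)
  have pt: "immersive_at X (u0, v0)" "unit_normal_at X (eta \<circ> phi) (u0, v0)"
    "mean_curv X (eta \<circ> phi) (u0, v0) = hmetric (X (u0, v0)) ((eta \<circ> phi) (u0, v0)) (0, 0, 1)"
    using pts U0 by (auto simp: X_def)
  show False using geo[OF pt yp first Q] .
qed

end
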